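(* Let $A$ be a nonempty finite set, $\Sigma\in\mathbb{R}$, and let $\sigma$ be a $\Sigma$-proximity on $A$. Then for all $x,y\in A$: $\sigma(x,y)=\sigma(y,x)$ (symmetry), and if $x\ne y$ then $\sigma(x,x)>\sigma(x,y)$ (egocentrism).
   Context: For a nonempty finite set $A$ and a real number $\Sigma$, a function $\sigma:A^2\to\mathbb{R}$ is called a $\Sigma$-proximity on $A$ if for all $x,y,z\in A$: (1) (normalization) $\sum_{t\in A}\sigma(x,t)=\Sigma$; (2) (triangle inequality) $\sigma(x,y)+\sigma(x,z)-\sigma(y,z)\le\sigma(x,x)$, and this inequality is strict whenever $z=y$ and $x\ne y$. *)

theory Defs
  imports Main "HOL.Real"
begin

definition proximity :: "'a set \<Rightarrow> real \<Rightarrow> ('a \<Rightarrow> 'a \<Rightarrow> real) \<Rightarrow> bool" where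
  "proximity A \<Sigma> \<sigma> \<longleftrightarrow>
     (\<forall>x\<in>A. (\<Sum>t\<in>A. \<sigma> x t) = \<Sigma>) \<and>
     (\<forall>x\<in>A. \<forall>y\<in>A. \<forall>z\<in>A. \<sigma> x y + \<sigma> x z - \<sigma> y z \<le> \<sigma> x x) \<and>
     (\<forall>x\<in>A. \<forall>y\<in>A. x \<noteq> y \<longrightarrow> \<sigma> x y + \<sigma> x y - \<sigma> y y < \<sigma> x x)"

end

theory Submission
  imports Defs
begin

theorem proposition1:
  fixes A :: "'a set" and \<Sigma> :: real and \<sigma> :: "'a \<Rightarrow> 'a \<Rightarrow> real"
  assumes "finite A" and "A \<noteq> {}" and "proximity A \<Sigma> \<sigma>"
  shows "\<forall>x\<in>A. \<forall>y\<in>A. \<sigma> x y = \<sigma> y x \<and> (x \<noteq> y \<longrightarrow> \<sigma> x x > \<sigma> x y)"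
proof (intro ballI conjI impI)
  fix x y assume x: "x \<in> A" and y: "y \<in> A"
  have N: "\<And>u. u \<in> A \<Longrightarrow> (\<Sum>t\<in>A. \<sigma> u t) = \<Sigma>"
    and T: "\<And>u v w. u \<in> A \<Longrightarrow> v \<in> A \<Longrightarrow> w \<in> A \<Longrightarrow> \<sigma> u v + \<sigma> u w - \<sigma> v w \<le> \<sigma> u u"
    and S: "\<And>u v. u \<in> A \<Longrightarrow> v \<in> A \<Longrightarrow> u \<noteq> v \<Longrightarrow> \<sigma> u v + \<sigma> u v - \<sigma> v v < \<sigma> u u"
    using assms(3) unfolding proximity_def by auto
  show "\<sigma> x y = \<sigma> y x" using T[OF x y x] T[OF y x y] by linarith
  assume xy: "x \<noteq> y"
  let ?f = "\<lambda>z. \<sigma> x x - \<sigma> x y - \<sigma> x z + \<sigma> y z"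
  have "0 < sum ?f A"
    apply (rule sum_pos2[OF assms(1) y])
    using S[OF x y xy] T[OF x y] by force+
  also have "sum ?f A = real (card A) * (\<sigma> x x - \<sigma> x y) - (\<Sum>t\<in>A. \<sigma> x t) + (\<Sum>t\<in>A. \<sigma> y t)"
    by (simp add: sum.distrib sum_subtractf)
  finally have "0 < real (card A) * (\<sigma> x x - \<sigma> x y)" using N[OF x] N[OF y] by simp
  then show "\<sigma> x x > \<sigma> x y"
    by (simp add: zero_less_mult_iff)
qed

end
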